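(* There is a function $C(t,\epsilon)$ such that the following holds for every positive integer $t$ and every $\epsilon\in(0,1)$: let $G$ be a connected balanced bipartite graph with parts $X,Y$ each of order $n$, with $\delta(G)\geq C(t,\epsilon)$ and with no induced $S_{t,t}$. Then \[|U_X(\epsilon)|,\ |U_Y(\epsilon)|\leq \frac{C(t,\epsilon)}{\delta(G)}\,n.\]
   Context: For positive integers $a,b$, the biclaw $S_{a,b}$ is the graph with vertex set $\{x,x_1,\dots,x_a,y,y_1,\dots,y_b\}$ and edges $xy$, $xy_1,\dots,xy_b$, $yx_1,\dots,yx_a$; "no induced $S_{t,t}$" means no induced subgraph isomorphic to $S_{t,t}$. For a bipartite graph with parts $X,Y$, $\Delta_X=\max_{x\in X} d(x)$, $\Delta_Y=\max_{y\in Y}d(y)$, and for $\epsilon\in(0,1)$, $U_X(\epsilon)=\{x\in X: d(x)\leq (1-\epsilon)\Delta_X\}$, $U_Y(\epsilon)=\{y\in Y: d(y)\leq(1-\epsilon)\Delta_Y\}$. $\delta(G)$ is the minimum degree. *)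

theory Defs
  imports Complex_Main
begin

definition graph :: "'a set \<Rightarrow> ('a \<Rightarrow> 'a \<Rightarrow> bool) \<Rightarrow> bool" where
  "graph V E \<longleftrightarrow> finite V \<and> (\<forall>u v. E u v \<longrightarrow> u \<in> V \<and> v \<in> V)
     \<and> (\<forall>u v. E u v \<longrightarrow> E v u) \<and> (\<forall>v. \<not> E v v)"

definition degree :: "'a set \<Rightarrow> ('a \<Rightarrow> 'a \<Rightarrow> bool) \<Rightarrow> 'a \<Rightarrow> nat" where
  "degree V E v = card {u \<in> V. E v u}"

definition min_degree :: "'a set \<Rightarrow> ('a \<Rightarrow> 'a \<Rightarrow> bool) \<Rightarrow> nat" where
  "min_degree V E = Min (degree V E ` V)"

definition max_degree_on :: "'a set \<Rightarrow> ('a \<Rightarrow> 'a \<Rightarrow> bool) \<Rightarrow> 'a set \<Rightarrow> nat" where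
  "max_degree_on V E X = Max (degree V E ` X)"

definition connected_graph :: "'a set \<Rightarrow> ('a \<Rightarrow> 'a \<Rightarrow> bool) \<Rightarrow> bool" where
  "connected_graph V E \<longleftrightarrow> V \<noteq> {} \<and>
     (\<forall>u\<in>V. \<forall>v\<in>V. (u, v) \<in> (rtrancl {(a, b). E a b}))"

definition bipartite_with :: "'a set \<Rightarrow> ('a \<Rightarrow> 'a \<Rightarrow> bool) \<Rightarrow> 'a set \<Rightarrow> 'a set \<Rightarrow> bool" where
  "bipartite_with V E X Y \<longleftrightarrow> X \<inter> Y = {} \<and> X \<union> Y = V
     \<and> (\<forall>u v. E u v \<longrightarrow> (u \<in> X \<and> v \<in> Y) \<or> (u \<in> Y \<and> v \<in> X))"

text \<open>Low-degree sets U_X(eps) = {x in X. d(x) <= (1 - eps) Delta_X}.\<close>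
definition low_set :: "'a set \<Rightarrow> ('a \<Rightarrow> 'a \<Rightarrow> bool) \<Rightarrow> 'a set \<Rightarrow> real \<Rightarrow> 'a set" where
  "low_set V E X eps = {x \<in> X. real (degree V E x) \<le> (1 - eps) * real (max_degree_on V E X)}"

text \<open>Vertices of the biclaw S_{a,b}: x, y, x_i (i<a), y_j (j<b), coded as
  BX, BY, BXi i, BYj j (indices 0-based).\<close>
datatype biclaw_vertex = BX | BY | BXi nat | BYj nat

definition biclaw_verts :: "nat \<Rightarrow> nat \<Rightarrow> biclaw_vertex set" where
  "biclaw_verts a b = {BX, BY} \<union> BXi ` {..<a} \<union> BYj ` {..<b}"

fun biclaw_edge0 :: "biclaw_vertex \<Rightarrow> biclaw_vertex \<Rightarrow> bool" where
  "biclaw_edge0 BX BY = True"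
| "biclaw_edge0 BX (BYj _) = True"
| "biclaw_edge0 BY (BXi _) = True"
| "biclaw_edge0 _ _ = False"

definition biclaw_edge :: "biclaw_vertex \<Rightarrow> biclaw_vertex \<Rightarrow> bool" where
  "biclaw_edge u v \<longleftrightarrow> biclaw_edge0 u v \<or> biclaw_edge0 v u"

definition has_induced_biclaw :: "'a set \<Rightarrow> ('a \<Rightarrow> 'a \<Rightarrow> bool) \<Rightarrow> nat \<Rightarrow> nat \<Rightarrow> bool" where
  "has_induced_biclaw V E a b \<longleftrightarrow>
     (\<exists>f. inj_on f (biclaw_verts a b) \<and> f ` biclaw_verts a b \<subseteq> V \<and>
          (\<forall>u\<in>biclaw_verts a b. \<forall>v\<in>biclaw_verts a b. E (f u) (f v) \<longleftrightarrow> biclaw_edge u v))"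

end

theory Submission
  imports Defs
begin


definition nbr :: "'a set \<Rightarrow> ('a \<Rightarrow> 'a \<Rightarrow> bool) \<Rightarrow> 'a \<Rightarrow> 'a set" where
  "nbr V E v = {u \<in> V. E v u}"

definition nobc :: "'a set \<Rightarrow> ('a \<Rightarrow> 'a \<Rightarrow> bool) \<Rightarrow> nat \<Rightarrow> bool" where
  "nobc V E t \<longleftrightarrow> (\<forall>u v A B. E u v \<longrightarrow> A \<subseteq> nbr V E v - {u} \<longrightarrow> B \<subseteq> nbr V E u - {v}
      \<longrightarrow> card A = t \<longrightarrow> card B = t \<longrightarrow> (\<exists>a\<in>A. \<exists>b\<in>B. E a b))"

lemma nobc_from:
  assumes G: "graph V E" and bp: "bipartite_with V E X Y" and nb: "\<not> has_induced_biclaw V E t t"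
  shows "nobc V E t"
  unfolding nobc_def
proof (intro allI impI, rule ccontr)
  fix u v A B
  assume uv: "E u v" and A: "A \<subseteq> nbr V E v - {u}" and B: "B \<subseteq> nbr V E u - {v}"
    and cA: "card A = t" and cB: "card B = t" and ne: "\<not> (\<exists>a\<in>A. \<exists>b\<in>B. E a b)"
  have fV: "finite V" using G by (simp add: graph_def)
  have fA: "finite A" using A fV finite_subset[of A V] by (auto simp: nbr_def)
  have fB: "finite B" using B fV finite_subset[of B V] by (auto simp: nbr_def)
  obtain ga where ga: "bij_betw ga {0..<t} A" using ex_bij_betw_nat_finite[OF fA] cA by auto
  obtain gb where gb: "bij_betw gb {0..<t} B" using ex_bij_betw_nat_finite[OF fB] cB by auto
  have sym: "\<And>p q. E p q \<Longrightarrow> E q p" and irr: "\<And>p. \<not> E p p" and inV: "\<And>p q. E p q \<Longrightarrow> p \<in> V \<and> q \<in> V"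
    using G by (auto simp: graph_def)
  have bpE: "\<And>p q. E p q \<Longrightarrow> (p \<in> X \<and> q \<in> Y) \<or> (p \<in> Y \<and> q \<in> X)" and XY: "X \<inter> Y = {}"
    using bp by (auto simp: bipartite_with_def)
  define P1 where "P1 = insert u A"
  define P2 where "P2 = insert v B"
  have sides: "(P1 \<subseteq> X \<and> P2 \<subseteq> Y) \<or> (P1 \<subseteq> Y \<and> P2 \<subseteq> X)"
  proof (cases "u \<in> X")
    case True
    then have "v \<in> Y" using bpE[OF uv] XY by auto
    then show ?thesis using True A B bpE XY unfolding P1_def P2_def nbr_def by blast
  next
    case False
    then have "u \<in> Y" "v \<in> X" using bpE[OF uv] XY by auto
    then show ?thesis using A B bpE XY unfolding P1_def P2_def nbr_def by blast
  qed
  have in1: "\<And>p q. p \<in> P1 \<Longrightarrow> q \<in> P1 \<Longrightarrow> \<not> E p q"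
    using sides bpE XY by blast
  have in2: "\<And>p q. p \<in> P2 \<Longrightarrow> q \<in> P2 \<Longrightarrow> \<not> E p q"
    using sides bpE XY by blast
  have dis: "P1 \<inter> P2 = {}" using sides XY by blast
  have uvne: "u \<noteq> v" using uv irr by auto
  have uA: "u \<notin> A" and vB: "v \<notin> B" using A B by auto
  have uB: "E u b" if "b \<in> B" for b using B that by (auto simp: nbr_def)
  have vA: "E v a" if "a \<in> A" for a using A that by (auto simp: nbr_def)
  define f where "f = (\<lambda>z. case z of BX \<Rightarrow> u | BY \<Rightarrow> v | BXi i \<Rightarrow> ga i | BYj j \<Rightarrow> gb j)"
  have gaA: "ga i \<in> A" if "i < t" for i using ga that by (auto simp: bij_betw_def)
  have gbB: "gb i \<in> B" if "i < t" for i using gb that by (auto simp: bij_betw_def)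
  have gainj: "ga i = ga j \<Longrightarrow> i < t \<Longrightarrow> j < t \<Longrightarrow> i = j" for i j
    using ga by (auto simp: bij_betw_def inj_on_def)
  have gbinj: "gb i = gb j \<Longrightarrow> i < t \<Longrightarrow> j < t \<Longrightarrow> i = j" for i j
    using gb by (auto simp: bij_betw_def inj_on_def)
  have "has_induced_biclaw V E t t"
    unfolding has_induced_biclaw_def
  proof (intro exI[of _ f] conjI)
    show "inj_on f (biclaw_verts t t)"
    proof (rule inj_onI)
      fix p q assume p: "p \<in> biclaw_verts t t" and q: "q \<in> biclaw_verts t t" and fpq: "f p = f q"
      have fp: "(p = BX \<and> f p = u) \<or> (p = BY \<and> f p = v) \<or> (\<exists>i<t. p = BXi i \<and> f p = ga i) \<or> (\<exists>j<t. p = BYj j \<and> f p = gb j)"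
        using p unfolding biclaw_verts_def f_def by auto
      have fq: "(q = BX \<and> f q = u) \<or> (q = BY \<and> f q = v) \<or> (\<exists>i<t. q = BXi i \<and> f q = ga i) \<or> (\<exists>j<t. q = BYj j \<and> f q = gb j)"
        using q unfolding biclaw_verts_def f_def by auto
      have d1: "\<And>a b. a \<in> P1 \<Longrightarrow> b \<in> P2 \<Longrightarrow> a \<noteq> b" using dis by blast
      have uP1: "u \<in> P1" and vP2: "v \<in> P2" unfolding P1_def P2_def by auto
      have AP1: "\<And>i. i < t \<Longrightarrow> ga i \<in> P1" using gaA unfolding P1_def by auto
      have BP2: "\<And>i. i < t \<Longrightarrow> gb i \<in> P2" using gbB unfolding P2_def by auto
      from fp fq fpq show "p = q"
        using d1 uP1 vP2 AP1 BP2 uA vB gaA gbB gainj gbinj uvne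
        by (elim disjE exE conjE) (simp_all; metis)+
    qed
    show "f ` biclaw_verts t t \<subseteq> V"
      unfolding biclaw_verts_def f_def using A B gaA gbB inV uv by (force simp: nbr_def)
    show "\<forall>p\<in>biclaw_verts t t. \<forall>q\<in>biclaw_verts t t. E (f p) (f q) = biclaw_edge p q"
    proof (intro ballI)
      fix p q assume p: "p \<in> biclaw_verts t t" and q: "q \<in> biclaw_verts t t"
      have uP1: "u \<in> P1" and vP2: "v \<in> P2" unfolding P1_def P2_def by auto
      have AP1: "\<And>i. i < t \<Longrightarrow> ga i \<in> P1" using gaA unfolding P1_def by auto
      have BP2: "\<And>i. i < t \<Longrightarrow> gb i \<in> P2" using gbB unfolding P2_def by auto
      have neAB: "\<And>i j. i < t \<Longrightarrow> j < t \<Longrightarrow> \<not> E (ga i) (gb j)" using ne gaA gbB by blast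
      have fp: "(p = BX) \<or> (p = BY) \<or> (\<exists>i<t. p = BXi i) \<or> (\<exists>j<t. p = BYj j)"
        using p unfolding biclaw_verts_def by auto
      have fq: "(q = BX) \<or> (q = BY) \<or> (\<exists>i<t. q = BXi i) \<or> (\<exists>j<t. q = BYj j)"
        using q unfolding biclaw_verts_def by auto
      from fp fq show "E (f p) (f q) = biclaw_edge p q"
        unfolding f_def biclaw_edge_def
        by (elim disjE exE conjE)
           (simp_all add: uv sym[OF uv] uB vA gbB gaA sym[OF uB] sym[OF vA] in1 in2 uP1 vP2 AP1 BP2 neAB irr;
            (metis sym neAB in1 in2 uP1 vP2 AP1 BP2)?)+
    qed
  qed
  then show False using nb by simp
qed



lemma double_count:
  assumes "finite P" "finite Q"
  shows "(\<Sum>p\<in>P. card {q\<in>Q. R p q}) = (\<Sum>q\<in>Q. card {p\<in>P. R p q})"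
proof -
  have "(\<Sum>p\<in>P. card {q\<in>Q. R p q}) = (\<Sum>p\<in>P. \<Sum>q\<in>Q. of_bool (R p q))"
    using assms by (simp add: Int_def conj_commute)
  also have "\<dots> = (\<Sum>q\<in>Q. \<Sum>p\<in>P. of_bool (R p q))" by (rule sum.swap)
  also have "\<dots> = (\<Sum>q\<in>Q. card {p\<in>P. R p q})"
    using assms by (simp add: Int_def conj_commute)
  finally show ?thesis .
qed

lemma count_lemma:
  fixes S :: "'b \<Rightarrow> 'a set"
  assumes fB: "finite B" and fW: "finite W"
    and hS: "\<And>w. w \<in> W \<Longrightarrow> S w \<subseteq> B \<and> m \<le> card (S w)"
    and hT: "\<And>T. T \<subseteq> B \<Longrightarrow> card T = t \<Longrightarrow> card {w\<in>W. T \<subseteq> S w} \<le> t - 1"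
  shows "card W * (m choose t) \<le> (t-1) * (card B choose t)"
proof -
  define Ts where "Ts = {T. T \<subseteq> B \<and> card T = t}"
  have fTs: "finite Ts" unfolding Ts_def using fB by (simp add: finite_subset)
  have "card W * (m choose t) = (\<Sum>w\<in>W. m choose t)" by simp
  also have "\<dots> \<le> (\<Sum>w\<in>W. card {T\<in>Ts. T \<subseteq> S w})"
  proof (rule sum_mono)
    fix w assume w: "w \<in> W"
    have fin: "finite (S w)" using hS[OF w] fB finite_subset by blast
    have "{T\<in>Ts. T \<subseteq> S w} = {T. T \<subseteq> S w \<and> card T = t}"
      unfolding Ts_def using hS[OF w] by auto
    then have "card {T\<in>Ts. T \<subseteq> S w} = card (S w) choose t"
      using n_subsets[OF fin] by simp
    then show "m choose t \<le> card {T\<in>Ts. T \<subseteq> S w}"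
      using binomial_right_mono hS[OF w] by simp
  qed
  also have "\<dots> = (\<Sum>T\<in>Ts. card {w\<in>W. T \<subseteq> S w})"
    by (rule double_count[OF fW fTs])
  also have "\<dots> \<le> (\<Sum>T\<in>Ts. t - 1)"
    by (rule sum_mono) (use hT in \<open>auto simp: Ts_def\<close>)
  also have "\<dots> = (t-1) * (card B choose t)"
    using n_subsets[OF fB] by (simp add: Ts_def)
  finally show ?thesis .
qed


lemma bad_bound:
  assumes G: "graph V E" and nb: "nobc V E t" and uv: "E u v"
    and eta: "0 < \<eta>" "\<eta> \<le> 1" and t: "0 < t"
    and big: "real t \<le> \<eta> * real (card (nbr V E u - {v}))"
  shows "real (card {w \<in> nbr V E v - {u}. \<eta> * real (card (nbr V E u - {v}))
            \<le> real (card ((nbr V E u - {v}) - nbr V E w))}) \<le> (real t - 1) * (real t / \<eta>) ^ t"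
proof -
  define Bs where "Bs = nbr V E u - {v}"
  define b where "b = card Bs"
  define W where "W = {w \<in> nbr V E v - {u}. \<eta> * real b \<le> real (card (Bs - nbr V E w))}"
  define m where "m = nat \<lceil>\<eta> * real b\<rceil>"
  have fV: "finite V" using G by (simp add: graph_def)
  have fBs: "finite Bs" unfolding Bs_def nbr_def using fV by auto
  have fW: "finite W" unfolding W_def nbr_def using fV by auto
  have tm: "t \<le> m" using big unfolding m_def b_def Bs_def by linarith
  have mb: "m \<le> b"
  proof -
    have "\<eta> * real b \<le> real b" using eta by (simp add: mult_left_le_one_le)
    then have "\<lceil>\<eta> * real b\<rceil> \<le> int b" by (metis ceiling_le_iff of_int_of_nat_eq)
    then show ?thesis unfolding m_def by (simp only: nat_le_iff)
  qed
  have hS: "\<And>w. w \<in> W \<Longrightarrow> (Bs - nbr V E w) \<subseteq> Bs \<and> m \<le> card (Bs - nbr V E w)"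
    unfolding W_def m_def by (auto simp: nat_le_iff ceiling_le_iff)
  have hT: "card {w\<in>W. T \<subseteq> Bs - nbr V E w} \<le> t - 1" if T: "T \<subseteq> Bs" "card T = t" for T
  proof (rule ccontr)
    assume "\<not> ?thesis"
    then have "t \<le> card {w\<in>W. T \<subseteq> Bs - nbr V E w}" by linarith
    then obtain A where A: "A \<subseteq> {w\<in>W. T \<subseteq> Bs - nbr V E w}" "card A = t"
      by (meson obtain_subset_with_card_n)
    have A1: "A \<subseteq> nbr V E v - {u}" using A unfolding W_def by auto
    have T1: "T \<subseteq> nbr V E u - {v}" using T unfolding Bs_def by auto
    have "\<exists>a\<in>A. \<exists>c\<in>T. E a c" using nb uv A1 T1 A(2) T(2) unfolding nobc_def by blast
    then obtain a c where ac: "a \<in> A" "c \<in> T" "E a c" by blast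
    have "c \<in> V" using T1 ac(2) by (auto simp: nbr_def)
    then have "c \<in> nbr V E a" using ac by (simp add: nbr_def)
    moreover have "c \<notin> nbr V E a" using A(1) ac by blast
    ultimately show False by blast
  qed
  have key: "card W * (m choose t) \<le> (t-1) * (b choose t)"
    using count_lemma[OF fBs fW hS hT] unfolding b_def by blast
  have ebpos: "0 < \<eta> * real b" using big t unfolding b_def Bs_def by linarith
  have bpos: "0 < real b" using ebpos eta by (simp add: zero_less_mult_iff)
  have tb: "t \<le> b" using tm mb by linarith
  have l1: "(real m / real t) ^ t \<le> real (m choose t)" using binomial_ge_n_over_k_pow_k[OF tm] by simp
  have l2: "real (b choose t) \<le> real b ^ t" using binomial_le_pow[OF tb] by (metis of_nat_le_iff of_nat_power)
  have em: "\<eta> * real b \<le> real m" unfolding m_def by (rule real_nat_ceiling_ge)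
  have l3: "(\<eta> * real b / real t) ^ t \<le> (real m / real t) ^ t"
    using em ebpos t by (intro power_mono divide_right_mono) auto
  have pos: "0 < (\<eta> * real b / real t) ^ t" using t ebpos by simp
  have key': "real (card W) * real (m choose t) \<le> (real t - 1) * real (b choose t)"
  proof -
    have "real (card W * (m choose t)) \<le> real ((t-1) * (b choose t))" using key by (rule of_nat_mono)
    moreover have "real (t - 1) = real t - 1" using t by simp
    ultimately show ?thesis by (simp only: of_nat_mult)
  qed
  have "real (card W) * (\<eta> * real b / real t) ^ t \<le> real (card W) * real (m choose t)"
    using order_trans[OF l3 l1] by (intro mult_left_mono) auto
  also have "\<dots> \<le> (real t - 1) * real (b choose t)" by (rule key')
  also have "\<dots> \<le> (real t - 1) * real b ^ t"
    using l2 t by (intro mult_left_mono) auto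
  also have "\<dots> = ((real t - 1) * (real t / \<eta>) ^ t) * (\<eta> * real b / real t) ^ t"
  proof -
    have "(real t / \<eta>) * (\<eta> * real b / real t) = real b" using t eta by simp
    then have "(real t / \<eta>) ^ t * (\<eta> * real b / real t) ^ t = real b ^ t"
      by (metis power_mult_distrib)
    then show ?thesis by (simp add: mult.assoc)
  qed
  finally have "real (card W) \<le> (real t - 1) * (real t / \<eta>) ^ t"
    using pos by (rule mult_right_le_imp_le)
  then show ?thesis unfolding W_def b_def Bs_def by simp
qed


lemma nonbad:
  assumes G: "graph V E" and nb: "nobc V E t" and uv: "E u v"
    and eta: "0 < \<eta>" "\<eta> \<le> 1" and t: "0 < t"
    and big: "real t \<le> \<eta> * real (card (nbr V E u - {v}))"
  shows "\<exists>S. S \<subseteq> nbr V E v - {u} \<and> real (card S) \<le> (real t - 1) * (real t / \<eta>) ^ t \<and>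
     (\<forall>w \<in> nbr V E v - {u} - S. real (card ((nbr V E u - {v}) \<inter> nbr V E w))
          > (1-\<eta>) * real (card (nbr V E u - {v})))"
proof -
  define S where "S = {w \<in> nbr V E v - {u}. \<eta> * real (card (nbr V E u - {v}))
            \<le> real (card ((nbr V E u - {v}) - nbr V E w))}"
  have fV: "finite V" using G by (simp add: graph_def)
  have fB: "finite (nbr V E u - {v})" using fV by (simp add: nbr_def)
  have "S \<subseteq> nbr V E v - {u}" unfolding S_def by auto
  moreover have "real (card S) \<le> (real t - 1) * (real t / \<eta>) ^ t"
    unfolding S_def by (rule bad_bound[OF G nb uv eta t big])
  moreover have "\<forall>w \<in> nbr V E v - {u} - S. real (card ((nbr V E u - {v}) \<inter> nbr V E w))
          > (1-\<eta>) * real (card (nbr V E u - {v}))"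
  proof
    fix w assume w: "w \<in> nbr V E v - {u} - S"
    then have lt: "real (card ((nbr V E u - {v}) - nbr V E w)) < \<eta> * real (card (nbr V E u - {v}))"
      unfolding S_def by auto
    have "card (nbr V E u - {v}) = card ((nbr V E u - {v}) \<inter> nbr V E w) + card ((nbr V E u - {v}) - nbr V E w)"
      by (rule card_Int_Diff[OF fB])
    then show "real (card ((nbr V E u - {v}) \<inter> nbr V E w)) > (1-\<eta>) * real (card (nbr V E u - {v}))"
      using lt by (simp add: algebra_simps)
  qed
  ultimately show ?thesis by blast
qed



lemma deg_eq: "degree V E v = card (nbr V E v)" by (simp add: degree_def nbr_def)

lemma card_diff_real:
  assumes "finite A" "finite B"
  shows "real (card A) - real (card B) \<le> real (card (A - B))"
proof -
  have "A \<subseteq> (A - B) \<union> B" by auto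
  then have "card A \<le> card ((A - B) \<union> B)" using assms by (intro card_mono) auto
  also have "\<dots> \<le> card (A - B) + card B" by (rule card_Un_le)
  finally show ?thesis by linarith
qed

lemma lin_aux: "3/4*(D-1) \<le> P \<Longrightarrow> C - k \<le> B \<Longrightarrow> P < C \<Longrightarrow> k \<le> K
        \<Longrightarrow> 8*K + T + 8 \<le> D \<Longrightarrow> 0 \<le> K \<Longrightarrow> 0 \<le> T \<Longrightarrow> 0 < (B::real)" for P D C k K T :: real
  by argo

lemma lin_aux2: "Z \<le> 5*K \<Longrightarrow> 8*K + T + 8 \<le> D \<Longrightarrow> 3/4*(D-1) \<le> P \<Longrightarrow> P < Z \<Longrightarrow> 0 \<le> K \<Longrightarrow> 0 \<le> T \<Longrightarrow> False"
  for Z K T D P :: real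
  by argo

lemma main_side:
  assumes G: "graph V E" and conn: "connected_graph V E" and bp: "bipartite_with V E X Y"
    and nb: "nobc V E t" and t: "0 < t" and e: "0 < \<epsilon>" "\<epsilon> < 1"
    and Cbig: "real (min_degree V E) \<ge> 8 * ((real t - 1) * (real t / (\<epsilon>/4)) ^ t) + 4 * real t / \<epsilon> + 8"
  shows "real (card (low_set V E X \<epsilon>)) * real (min_degree V E)
           \<le> ((real t - 1) * (real t / (\<epsilon>/4)) ^ t) * real (card Y)"
proof -
  define \<eta> where "\<eta> = \<epsilon> / 4"
  define K where "K = (real t - 1) * (real t / \<eta>) ^ t"
  define N where "N = nbr V E"
  define \<delta> where "\<delta> = min_degree V E"
  have eta: "0 < \<eta>" "\<eta> \<le> 1" "\<eta> \<le> 1/4" using e unfolding \<eta>_def by auto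
  have K0: "0 \<le> K" unfolding K_def using t eta by simp
  have dbig: "real \<delta> \<ge> 8 * K + 4 * real t / \<epsilon> + 8" using Cbig unfolding \<delta>_def K_def \<eta>_def .
  have fV: "finite V" and sym: "\<And>p q. E p q \<Longrightarrow> E q p" and irr: "\<And>p. \<not> E p p"
    and inV: "\<And>p q. E p q \<Longrightarrow> p \<in> V \<and> q \<in> V"
    using G by (auto simp: graph_def)
  have bpE: "\<And>p q. E p q \<Longrightarrow> (p \<in> X \<and> q \<in> Y) \<or> (p \<in> Y \<and> q \<in> X)" and XY: "X \<inter> Y = {}"
    and XuY: "X \<union> Y = V"
    using bp by (auto simp: bipartite_with_def)
  have Vne: "V \<noteq> {}" using conn by (simp add: connected_graph_def)
  have fN: "\<And>v. finite (N v)" unfolding N_def nbr_def using fV by auto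
  have Nmem: "\<And>v w. w \<in> N v \<longleftrightarrow> E v w" unfolding N_def nbr_def using inV by auto
  have NX: "N x \<subseteq> Y" if x: "x \<in> X" for x
  proof
    fix w assume "w \<in> N x" then have "E x w" using Nmem by blast
    then show "w \<in> Y" using bpE[of x w] x XY by blast
  qed
  have NY: "N y \<subseteq> X" if y: "y \<in> Y" for y
  proof
    fix w assume "w \<in> N y" then have "E y w" using Nmem by blast
    then show "w \<in> X" using bpE[of y w] y XY by blast
  qed
  have deg: "\<And>v. degree V E v = card (N v)" unfolding N_def by (rule deg_eq)
  have dmin: "\<And>v. v \<in> V \<Longrightarrow> \<delta> \<le> card (N v)"
    unfolding \<delta>_def min_degree_def deg[symmetric] using fV by (simp add: Min_le)
  have dbig2: "real (card (N v)) \<ge> 8 * K + 4 * real t / \<epsilon> + 8" if "v \<in> V" for v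
  proof -
    have "real \<delta> \<le> real (card (N v))" using dmin[OF that] by simp
    then show ?thesis using dbig by linarith
  qed
  have NB: "\<exists>S. S \<subseteq> N v - {u} \<and> real (card S) \<le> K \<and>
     (\<forall>w \<in> N v - {u} - S. real (card ((N u - {v}) \<inter> N w)) > (1-\<eta>) * (real (card (N u)) - 1))"
    if uv: "E u v" for u v
  proof -
    have uV: "u \<in> V" using inV uv by blast
    have vN: "v \<in> N u" using Nmem uv by blast
    have cB: "card (N u - {v}) = card (N u) - 1" using vN fN by simp
    have cB': "real (card (N u - {v})) = real (card (N u)) - 1"
    proof -
      have "0 < card (N u)" using vN fN card_gt_0_iff by blast
      then show ?thesis using cB by simp
    qed
    have "real t \<le> \<eta> * (real (card (N u)) - 1)"
    proof -
      have a: "real (card (N u)) - 1 \<ge> 4 * real t / \<epsilon>" using dbig2[OF uV] K0 by linarith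
      have "\<eta> * (4 * real t / \<epsilon>) = real t" unfolding \<eta>_def using e by simp
      moreover have "\<eta> * (4 * real t / \<epsilon>) \<le> \<eta> * (real (card (N u)) - 1)"
        using a eta(1) by (intro mult_left_mono) auto
      ultimately show ?thesis by linarith
    qed
    then have big: "real t \<le> \<eta> * real (card (nbr V E u - {v}))" using cB' unfolding N_def by simp
    obtain S where S: "S \<subseteq> N v - {u}" "real (card S) \<le> K"
      "\<forall>w \<in> N v - {u} - S. real (card ((N u - {v}) \<inter> N w)) > (1-\<eta>) * real (card (N u - {v}))"
      using nonbad[OF G nb uv eta(1,2) t big] unfolding N_def K_def by blast
    show ?thesis using S cB' by (intro exI[of _ S]) simp
  qed
  obtain v0 where v0: "v0 \<in> V" using Vne by blast
  have "N v0 \<noteq> {}"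
  proof
    assume "N v0 = {}" then have "real (card (N v0)) = 0" by simp
    moreover have "0 \<le> 4 * real t / \<epsilon>" using e by simp
    ultimately show False using dbig2[OF v0] K0 by linarith
  qed
  then obtain w0 where w0: "w0 \<in> N v0" by blast
  have Xne: "X \<noteq> {}" using bpE[of v0 w0] w0 Nmem by blast
  have fX: "finite X" using XuY fV finite_subset[of X V] by blast
  have fY: "finite Y" using XuY fV finite_subset[of Y V] by blast
  define \<Delta> where "\<Delta> = max_degree_on V E X"
  have \<Delta>def: "\<Delta> = Max ((\<lambda>v. card (N v)) ` X)" unfolding \<Delta>_def max_degree_on_def deg ..
  have "Max ((\<lambda>v. card (N v)) ` X) \<in> (\<lambda>v. card (N v)) ` X"
    using fX Xne by (intro Max_in) auto
  then obtain x0 where x0: "x0 \<in> X" "card (N x0) = \<Delta>" unfolding \<Delta>def by auto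
  have dleD: "\<And>x. x \<in> X \<Longrightarrow> card (N x) \<le> \<Delta>" unfolding \<Delta>def using fX by simp
  have XV: "X \<subseteq> V" and YV: "Y \<subseteq> V" using XuY by auto
  have Dbig: "real \<Delta> \<ge> 8 * K + 4 * real t / \<epsilon> + 8" using dbig2[of x0] x0 XV by auto
  have tpos: "0 \<le> 4 * real t / \<epsilon>" using e by simp
  define Y0 where "Y0 = N x0"
  define c where "c x = card (N x \<inter> Y0)" for x
  have cle: "\<And>x. c x \<le> card (N x)" unfolding c_def by (simp add: card_mono fN)
  have cx0: "c x0 = \<Delta>" unfolding c_def Y0_def using x0 by simp
  have step1: "\<exists>S. S \<subseteq> N y \<and> real (card S) \<le> K \<and> (\<forall>x \<in> N y - S. real (c x) > (1-\<eta>) * real \<Delta>)"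
    if y: "y \<in> Y0" for y
  proof -
    have ey: "E x0 y" using y Nmem unfolding Y0_def by blast
    obtain S where S: "S \<subseteq> N y - {x0}" "real (card S) \<le> K"
      "\<forall>w \<in> N y - {x0} - S. real (card ((N x0 - {y}) \<inter> N w)) > (1-\<eta>) * (real (card (N x0)) - 1)"
      using NB[OF ey] by blast
    have "\<forall>x \<in> N y - S. real (c x) > (1-\<eta>) * real \<Delta>"
    proof
      fix x assume x: "x \<in> N y - S"
      show "real (c x) > (1-\<eta>) * real \<Delta>"
      proof (cases "x = x0")
        case True then show ?thesis using cx0 eta Dbig K0 tpos by (simp add: algebra_simps)
      next
        case False
        then have lt: "real (card ((N x0 - {y}) \<inter> N x)) > (1-\<eta>) * (real \<Delta> - 1)"
          using S x x0 by auto
        have yx: "y \<in> N x" using x Nmem sym by blast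
        have sub: "insert y ((N x0 - {y}) \<inter> N x) \<subseteq> N x \<inter> Y0" using yx y unfolding Y0_def by auto
        have "card (insert y ((N x0 - {y}) \<inter> N x)) = card ((N x0 - {y}) \<inter> N x) + 1"
          using fN by simp
        then have "card ((N x0 - {y}) \<inter> N x) + 1 \<le> c x"
          unfolding c_def by (metis card_mono[OF _ sub] fN finite_Int)
        then have "real (card ((N x0 - {y}) \<inter> N x)) + 1 \<le> real (c x)" by linarith
        then show ?thesis using lt eta by (simp add: algebra_simps)
      qed
    qed
    then show ?thesis using S by (intro exI[of _ S]) auto
  qed
  have Dpos: "0 < real \<Delta>" using Dbig K0 tpos by linarith
  define Xm where "Xm = {x\<in>X. (1-2*\<eta>)*real \<Delta> - 1 < real (c x) \<and> real (c x) \<le> (1-\<eta>)*real \<Delta>}"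
  have fXm: "finite Xm" unfolding Xm_def using fX by simp
  have fY0: "finite Y0" unfolding Y0_def using fN by simp
  have mid: "real (card Xm) \<le> 4 * K"
  proof -
    have ceq: "c x = card {y\<in>Y0. E x y}" for x
    proof -
      have "N x \<inter> Y0 = {y\<in>Y0. E x y}" using Nmem by auto
      then show ?thesis unfolding c_def by simp
    qed
    have "(\<Sum>x\<in>Xm. c x) = (\<Sum>x\<in>Xm. card {y\<in>Y0. E x y})" using ceq by simp
    also have "\<dots> = (\<Sum>y\<in>Y0. card {x\<in>Xm. E x y})" by (rule double_count[OF fXm fY0])
    finally have eqn: "(\<Sum>x\<in>Xm. c x) = (\<Sum>y\<in>Y0. card {x\<in>Xm. E x y})" .
    have eq: "(\<Sum>x\<in>Xm. real (c x)) = (\<Sum>y\<in>Y0. real (card {x\<in>Xm. E x y}))"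
      unfolding of_nat_sum[symmetric] eqn ..
    have up: "real (card {x\<in>Xm. E x y}) \<le> K" if y: "y \<in> Y0" for y
    proof -
      obtain S where S: "S \<subseteq> N y" "real (card S) \<le> K" "\<forall>x \<in> N y - S. real (c x) > (1-\<eta>) * real \<Delta>"
        using step1[OF y] by blast
      have "{x\<in>Xm. E x y} \<subseteq> S"
      proof
        fix x assume x: "x \<in> {x\<in>Xm. E x y}"
        then have "x \<in> N y" using Nmem sym by blast
        moreover have "\<not> real (c x) > (1-\<eta>) * real \<Delta>" using x unfolding Xm_def by auto
        ultimately show "x \<in> S" using S(3) by blast
      qed
      then have "card {x\<in>Xm. E x y} \<le> card S" using finite_subset[OF S(1) fN] by (rule card_mono[rotated])
      then show ?thesis using S(2) by linarith
    qed
    have lo: "real \<Delta> / 4 \<le> real (c x)" if x: "x \<in> Xm" for x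
    proof -
      have "\<eta> * real \<Delta> \<le> (1/4) * real \<Delta>" using eta Dpos by (intro mult_right_mono) auto
      then have "(1-2*\<eta>)*real \<Delta> \<ge> real \<Delta> / 2" by (simp add: algebra_simps)
      moreover have "real \<Delta> / 4 \<ge> 1" using Dbig K0 tpos by linarith
      moreover have "(1-2*\<eta>)*real \<Delta> - 1 < real (c x)" using x unfolding Xm_def by blast
      ultimately show ?thesis by linarith
    qed
    have "real (card Xm) * (real \<Delta> / 4) = (\<Sum>x\<in>Xm. real \<Delta> / 4)" by simp
    also have "\<dots> \<le> (\<Sum>x\<in>Xm. real (c x))" by (rule sum_mono) (rule lo)
    also have "\<dots> = (\<Sum>y\<in>Y0. real (card {x\<in>Xm. E x y}))" by (rule eq)
    also have "\<dots> \<le> (\<Sum>y\<in>Y0. K)" by (rule sum_mono) (rule up)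
    also have "\<dots> = real \<Delta> * K" unfolding Y0_def using x0 by simp
    finally have "real (card Xm) * (real \<Delta> / 4) \<le> real \<Delta> * K" .
    then have "real \<Delta> * (real (card Xm)) \<le> real \<Delta> * (4 * K)" by (simp add: algebra_simps)
    then show ?thesis using Dpos by (simp add: mult_le_cancel_left_pos)
  qed
  define Xg where "Xg = {x\<in>X. real (c x) > (1-\<eta>)*real \<Delta>}"
  define Yn where "Yn = {y\<in>Y. \<exists>x\<in>N y. x \<in> Xg}"
  have step2: "real (card (N w - Xg)) \<le> 5 * K" if w: "w \<in> Yn" for w
  proof -
    obtain x' where x': "x' \<in> N w" "x' \<in> Xg" using w unfolding Yn_def by blast
    have wY: "w \<in> Y" using w unfolding Yn_def by blast
    have ex: "E x' w" using x' Nmem sym by blast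
    have x'X: "x' \<in> X" using x' unfolding Xg_def by blast
    obtain S where S: "S \<subseteq> N w - {x'}" "real (card S) \<le> K"
      "\<forall>z \<in> N w - {x'} - S. real (card ((N x' - {w}) \<inter> N z)) > (1-\<eta>) * (real (card (N x')) - 1)"
      using NB[OF ex] by blast
    have sub: "N w - Xg \<subseteq> S \<union> Xm"
    proof
      fix z assume z: "z \<in> N w - Xg"
      show "z \<in> S \<union> Xm"
      proof (cases "z \<in> S")
        case True then show ?thesis by blast
      next
        case False
        have zX: "z \<in> X" using z NY[OF wY] by blast
        have zne: "z \<noteq> x'" using z x' by blast
        have lt: "real (card ((N x' - {w}) \<inter> N z)) > (1-\<eta>) * (real (card (N x')) - 1)"
          using S(3) z zne False by blast
        have s2: "(N x' - {w}) \<inter> N z \<subseteq> (N z \<inter> Y0) \<union> (N x' - Y0)" by auto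
        have "card ((N x' - {w}) \<inter> N z) \<le> card ((N z \<inter> Y0) \<union> (N x' - Y0))"
          using s2 fN by (intro card_mono) auto
        also have "\<dots> \<le> c z + card (N x' - Y0)" unfolding c_def by (rule card_Un_le)
        finally have a: "real (card ((N x' - {w}) \<inter> N z)) \<le> real (c z) + real (card (N x' - Y0))" by linarith
        have b: "card (N x') = c x' + card (N x' - Y0)" unfolding c_def by (rule card_Int_Diff[OF fN])
        have dx': "real (card (N x')) \<le> real \<Delta>" using dleD[OF x'X] by simp
        have cx': "real (c x') > (1-\<eta>)*real \<Delta>" using x' unfolding Xg_def by blast
        have m1: "\<eta> * real (card (N x')) \<le> \<eta> * real \<Delta>" using dx' eta by (intro mult_left_mono) auto
        have b': "real (card (N x')) = real (c x') + real (card (N x' - Y0))" using b by simp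
        have e1: "(1-\<eta>) * (real (card (N x')) - 1) = real (card (N x')) - \<eta> * real (card (N x')) - 1 + \<eta>"
          by (simp add: algebra_simps)
        have e2: "(1-2*\<eta>)*real \<Delta> = real \<Delta> - 2 * (\<eta> * real \<Delta>)" by (simp add: algebra_simps)
        have e3: "(1-\<eta>)*real \<Delta> = real \<Delta> - \<eta> * real \<Delta>" by (simp add: algebra_simps)
        have "real (c z) > (1-2*\<eta>)*real \<Delta> - 1"
        proof -
          have f1: "real (c z) \<ge> real (card ((N x' - {w}) \<inter> N z)) - real (card (N x' - Y0))" using a by linarith
          have f2: "real (card ((N x' - {w}) \<inter> N z)) - real (card (N x' - Y0)) > real (c x') - \<eta> * real (card (N x')) - 1 + \<eta>"
            using lt e1 b' by linarith
          have f3: "real (c x') - \<eta> * real (card (N x')) - 1 + \<eta> > (1-2*\<eta>)*real \<Delta> - 1"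
          proof -
            have l: "\<And>a D q p h::real. a > D - q \<Longrightarrow> p \<le> q \<Longrightarrow> 0 < h \<Longrightarrow> a - p - 1 + h > (D - 2*q) - 1"
              by linarith
            have "real (c x') > real \<Delta> - \<eta> * real \<Delta>" using cx' e3 by simp
            from l[OF this m1 eta(1)] show ?thesis unfolding e2 .
          qed
          show ?thesis using f1 f2 f3 by linarith
        qed
        moreover have "real (c z) \<le> (1-\<eta>)*real \<Delta>" using z zX unfolding Xg_def by auto
        ultimately show ?thesis using zX unfolding Xm_def by blast
      qed
    qed
    have "card (N w - Xg) \<le> card (S \<union> Xm)" using sub fN fXm S(1) by (intro card_mono) (auto intro: finite_subset)
    also have "\<dots> \<le> card S + card Xm" by (rule card_Un_le)
    finally show ?thesis using S(2) mid by linarith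
  qed
  have step2': "real (card (N w \<inter> Xg)) \<ge> real (card (N w)) - 5 * K" if w: "w \<in> Yn" for w
    using card_Int_Diff[OF fN, of w Xg] step2[OF w] by linarith
  have step3: "real (card (N x \<inter> Yn)) > (1-\<eta>)*(real (card (N x)) - 1)"
    if x: "x \<in> X" "y' \<in> N x" "y' \<in> Yn" for x y'
  proof -
    have ex: "E x y'" using x Nmem by blast
    obtain S where S: "S \<subseteq> N y' - {x}" "real (card S) \<le> K"
      "\<forall>z \<in> N y' - {x} - S. real (card ((N x - {y'}) \<inter> N z)) > (1-\<eta>) * (real (card (N x)) - 1)"
      using NB[OF ex] by blast
    have y'Y: "y' \<in> Y" using x unfolding Yn_def by blast
    have fS: "finite S" using finite_subset[OF S(1) finite_Diff[OF fN]] .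
    have "real (card (N y' \<inter> Xg)) - real (card (insert x S)) \<le> real (card ((N y' \<inter> Xg) - insert x S))"
      using fN fS by (intro card_diff_real) auto
    moreover have "real (card (insert x S)) \<le> real (card S) + 1"
    proof -
      have "card (insert x S) \<le> Suc (card S)" by (simp add: card_insert_if fS)
      then show ?thesis by simp
    qed
    moreover have "real (card (N y')) \<ge> 8 * K + 4 * real t / \<epsilon> + 8" using dbig2 y'Y YV by blast
    ultimately have "real (card ((N y' \<inter> Xg) - insert x S)) > 0"
      using step2'[OF x(3)] S(2) K0 tpos by linarith
    then have "0 < card ((N y' \<inter> Xg) - insert x S)" by simp
    then have "(N y' \<inter> Xg) - insert x S \<noteq> {}" using card_gt_0_iff by blast
    then obtain z where z: "z \<in> (N y' \<inter> Xg) - insert x S" by blast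
    then have lt: "real (card ((N x - {y'}) \<inter> N z)) > (1-\<eta>) * (real (card (N x)) - 1)" using S(3) by blast
    have "(N x - {y'}) \<inter> N z \<subseteq> N x \<inter> Yn"
    proof
      fix q assume q: "q \<in> (N x - {y'}) \<inter> N z"
      have zX: "z \<in> X" using z NY[OF y'Y] by blast
      have qY: "q \<in> Y" using q NX[OF zX] by blast
      have "z \<in> N q" using q Nmem sym by blast
      then show "q \<in> N x \<inter> Yn" using q qY z unfolding Yn_def by blast
    qed
    then have "card ((N x - {y'}) \<inter> N z) \<le> card (N x \<inter> Yn)" using fN by (intro card_mono) auto
    then show ?thesis using lt by linarith
  qed
  have step4: "y \<in> Yn" if x: "x \<in> X" "y' \<in> N x" "y' \<in> Yn" "y \<in> N x" for x y' y
  proof (rule ccontr)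
    assume yn: "y \<notin> Yn"
    have yY: "y \<in> Y" using x NX by blast
    have ex: "E y x" using x Nmem sym by blast
    obtain S where S: "S \<subseteq> N x - {y}" "real (card S) \<le> K"
      "\<forall>w \<in> N x - {y} - S. real (card ((N y - {x}) \<inter> N w)) > (1-\<eta>) * (real (card (N y)) - 1)"
      using NB[OF ex] by blast
    have fS: "finite S" using finite_subset[OF S(1) finite_Diff[OF fN]] .
    have c3: "real (card (N x \<inter> Yn)) > (1-\<eta>)*(real (card (N x)) - 1)" by (rule step3[OF x(1-3)])
    have dx: "real (card (N x)) \<ge> 8 * K + 4 * real t / \<epsilon> + 8" using dbig2 x(1) XV by blast
    have "(1-\<eta>)*(real (card (N x)) - 1) \<ge> (3/4) * (real (card (N x)) - 1)"
      using eta dx K0 tpos by (intro mult_right_mono) auto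
    moreover have "real (card (N x \<inter> Yn)) - real (card S) \<le> real (card ((N x \<inter> Yn) - S))"
      using fN fS by (intro card_diff_real) auto
    ultimately have "real (card ((N x \<inter> Yn) - S)) > 0" using c3 S(2) dx K0 tpos lin_aux by blast
    then have "0 < card ((N x \<inter> Yn) - S)" by simp
    then have "(N x \<inter> Yn) - S \<noteq> {}" using card_gt_0_iff by blast
    then obtain w where w: "w \<in> (N x \<inter> Yn) - S" by blast
    have wy: "w \<noteq> y" using w yn by blast
    have lt: "real (card ((N y - {x}) \<inter> N w)) > (1-\<eta>) * (real (card (N y)) - 1)" using S(3) w wy by blast
    have "(N y - {x}) \<inter> N w \<subseteq> N w - Xg"
    proof
      fix q assume q: "q \<in> (N y - {x}) \<inter> N w"
      have "q \<notin> Xg" using q yn yY unfolding Yn_def by blast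
      then show "q \<in> N w - Xg" using q by blast
    qed
    then have "card ((N y - {x}) \<inter> N w) \<le> card (N w - Xg)" using fN by (intro card_mono) auto
    then have "real (card ((N y - {x}) \<inter> N w)) \<le> real (card (N w - Xg))" by simp
    moreover have "w \<in> Yn" using w by blast
    ultimately have "real (card ((N y - {x}) \<inter> N w)) \<le> 5 * K" using step2 by fastforce
    moreover have dy: "real (card (N y)) \<ge> 8 * K + 4 * real t / \<epsilon> + 8" using dbig2 yY YV by blast
    moreover have "(1-\<eta>)*(real (card (N y)) - 1) \<ge> (3/4) * (real (card (N y)) - 1)"
      using eta dy K0 tpos by (intro mult_right_mono) auto
    ultimately show False using lt K0 tpos lin_aux2 by blast
  qed
  define P where "P = {v. v \<in> Yn \<or> (v \<in> X \<and> (\<exists>y'\<in>N v. y' \<in> Yn))}"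
  have x0P: "x0 \<in> P"
  proof -
    have "0 < card (N x0)" using x0(2) Dpos by simp
    then obtain y where y: "y \<in> N x0" using card_gt_0_iff by (metis ex_in_conv)
    have yY: "y \<in> Y" using y NX[OF x0(1)] by blast
    have "x0 \<in> N y" using y Nmem sym by blast
    moreover have "x0 \<in> Xg" unfolding Xg_def using x0(1) cx0 Dpos eta by auto
    ultimately have "y \<in> Yn" unfolding Yn_def using yY by blast
    then show ?thesis unfolding P_def using x0(1) y by blast
  qed
  have reach: "b \<in> P" if "(x0, b) \<in> rtrancl {(a, b). E a b}" for b
    using that
  proof (induction rule: rtrancl_induct)
    case base then show ?case by (rule x0P)
  next
    case (step a b)
    have ab: "E a b" using step.hyps(2) by simp
    from step.IH have "a \<in> Yn \<or> (a \<in> X \<and> (\<exists>y'\<in>N a. y' \<in> Yn))" unfolding P_def by blast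
    then show ?case
    proof
      assume aY: "a \<in> Yn"
      then have "a \<in> Y" unfolding Yn_def by blast
      then have bX: "b \<in> X" using ab NY Nmem by blast
      have "a \<in> N b" using ab Nmem sym by blast
      then show ?thesis unfolding P_def using bX aY by blast
    next
      assume aX: "a \<in> X \<and> (\<exists>y'\<in>N a. y' \<in> Yn)"
      then obtain y' where "y' \<in> N a" "y' \<in> Yn" by blast
      moreover have "b \<in> N a" using ab Nmem by blast
      ultimately have "b \<in> Yn" using step4 aX by blast
      then show ?thesis unfolding P_def by blast
    qed
  qed
  have allYn: "y \<in> Yn" if y: "y \<in> Y" for y
  proof -
    have "(x0, y) \<in> rtrancl {(a, b). E a b}" using conn x0(1) y XV YV unfolding connected_graph_def by blast
    then have "y \<in> P" by (rule reach)
    then show ?thesis unfolding P_def using y XY by blast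
  qed
  define U where "U = low_set V E X \<epsilon>"
  have Udef: "U = {x\<in>X. real (card (N x)) \<le> (1-\<epsilon>) * real \<Delta>}"
    unfolding U_def low_set_def \<Delta>_def deg ..
  have fU: "finite U" unfolding Udef using fX by simp
  have step6: "real (card {x\<in>U. E x y}) \<le> K" if y: "y \<in> Y" for y
  proof -
    have "y \<in> Yn" using allYn[OF y] .
    then obtain x' where x': "x' \<in> N y" "x' \<in> Xg" unfolding Yn_def by blast
    have ex: "E x' y" using x' Nmem sym by blast
    obtain S where S: "S \<subseteq> N y - {x'}" "real (card S) \<le> K"
      "\<forall>z \<in> N y - {x'} - S. real (card ((N x' - {y}) \<inter> N z)) > (1-\<eta>) * (real (card (N x')) - 1)"
      using NB[OF ex] by blast
    have cx': "real (c x') > (1-\<eta>)*real \<Delta>" using x' unfolding Xg_def by blast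
    have cd': "real (c x') \<le> real (card (N x'))" using cle[of x'] by simp
    have sub: "{x\<in>U. E x y} \<subseteq> S"
    proof
      fix x assume x: "x \<in> {x\<in>U. E x y}"
      have xU: "real (card (N x)) \<le> (1-\<epsilon>) * real \<Delta>" using x unfolding Udef by blast
      have xN: "x \<in> N y" using x Nmem sym by blast
      have m0: "(1-\<epsilon>) * real \<Delta> \<le> (1-\<eta>) * real \<Delta>" using e Dpos unfolding \<eta>_def by (intro mult_right_mono) auto
      show "x \<in> S"
      proof (rule ccontr)
        assume xS: "x \<notin> S"
        have xne: "x \<noteq> x'" using xU cx' cd' m0 by auto
        have lt: "real (card ((N x' - {y}) \<inter> N x)) > (1-\<eta>) * (real (card (N x')) - 1)"
          using S(3) xN xne xS by blast
        have yx: "y \<in> N x" using x Nmem by blast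
        have "insert y ((N x' - {y}) \<inter> N x) \<subseteq> N x" using yx by blast
        then have "card (insert y ((N x' - {y}) \<inter> N x)) \<le> card (N x)" using fN by (intro card_mono) auto
        moreover have "card (insert y ((N x' - {y}) \<inter> N x)) = card ((N x' - {y}) \<inter> N x) + 1" using fN by simp
        ultimately have g: "real (card ((N x' - {y}) \<inter> N x)) + 1 \<le> real (card (N x))" by linarith
        have h1: "(1-\<eta>) * (real (card (N x')) - 1) + 1 \<ge> (1-\<eta>) * real (card (N x'))"
          using eta by (simp add: algebra_simps)
        have h2: "(1-\<eta>) * real (card (N x')) \<ge> (1-\<eta>) * real (c x')" using cd' eta by (intro mult_left_mono) auto
        have h3: "(1-\<eta>) * real (c x') > (1-\<eta>) * ((1-\<eta>)*real \<Delta>)" using cx' eta by (intro mult_strict_left_mono) auto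
        have h4: "(1-\<eta>) * ((1-\<eta>)*real \<Delta>) \<ge> (1-\<epsilon>) * real \<Delta>"
        proof -
          have "(1-\<eta>) * ((1-\<eta>)*real \<Delta>) = (1 - 2*\<eta>) * real \<Delta> + \<eta>^2 * real \<Delta>" by (simp add: algebra_simps power2_eq_square)
          moreover have "0 \<le> \<eta>^2 * real \<Delta>" by simp
          moreover have "(1 - 2*\<eta>) * real \<Delta> \<ge> (1-\<epsilon>) * real \<Delta>" using e Dpos unfolding \<eta>_def by (intro mult_right_mono) auto
          ultimately show ?thesis by linarith
        qed
        show False using g lt h1 h2 h3 h4 xU by linarith
      qed
    qed
    have "card {x\<in>U. E x y} \<le> card S" using sub finite_subset[OF S(1) finite_Diff[OF fN]] by (rule card_mono[rotated])
    then show ?thesis using S(2) by linarith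
  qed
  have "(\<Sum>x\<in>U. card {y\<in>Y. E x y}) = (\<Sum>y\<in>Y. card {x\<in>U. E x y})" by (rule double_count[OF fU fY])
  then have eq: "(\<Sum>x\<in>U. real (card {y\<in>Y. E x y})) = (\<Sum>y\<in>Y. real (card {x\<in>U. E x y}))"
    unfolding of_nat_sum[symmetric] by simp
  have lo: "real \<delta> \<le> real (card {y\<in>Y. E x y})" if x: "x \<in> U" for x
  proof -
    have xX: "x \<in> X" using x unfolding Udef by blast
    have "{y\<in>Y. E x y} = N x" using NX[OF xX] Nmem by auto
    then show ?thesis using dmin xX XV by auto
  qed
  have "real (card U) * real \<delta> = (\<Sum>x\<in>U. real \<delta>)" by simp
  also have "\<dots> \<le> (\<Sum>x\<in>U. real (card {y\<in>Y. E x y}))" by (rule sum_mono) (rule lo)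
  also have "\<dots> = (\<Sum>y\<in>Y. real (card {x\<in>U. E x y}))" by (rule eq)
  also have "\<dots> \<le> (\<Sum>y\<in>Y. K)" by (rule sum_mono) (rule step6)
  also have "\<dots> = K * real (card Y)" by simp
  finally show ?thesis unfolding U_def \<delta>_def K_def \<eta>_def .
qed


lemma final_bound:
  assumes "real u * d \<le> K * n" "K \<le> C" "C \<le> d" "0 < C" "0 \<le> n"
  shows "real u \<le> C / d * n"
proof -
  have dpos: "0 < d" using assms by linarith
  have "real u * d \<le> C * n" using assms(1,2,5) by (meson mult_right_mono order_trans)
  then have "real u \<le> C * n / d" using dpos by (simp add: pos_le_divide_eq)
  then show ?thesis by simp
qed

theorem mainTheorem11:
  "\<exists>C :: nat \<Rightarrow> real \<Rightarrow> real. \<forall>(t::nat) (eps::real).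
     t > 0 \<longrightarrow> 0 < eps \<longrightarrow> eps < 1 \<longrightarrow>
     (\<forall>(V :: nat set) E X Y n.
        graph V E \<longrightarrow> connected_graph V E \<longrightarrow> bipartite_with V E X Y \<longrightarrow>
        card X = n \<longrightarrow> card Y = n \<longrightarrow>
        real (min_degree V E) \<ge> C t eps \<longrightarrow>
        \<not> has_induced_biclaw V E t t \<longrightarrow>
        real (card (low_set V E X eps)) \<le> C t eps / real (min_degree V E) * real n \<and>
        real (card (low_set V E Y eps)) \<le> C t eps / real (min_degree V E) * real n)"
proof (intro exI[of _ "\<lambda>t eps. 8 * ((real t - 1) * (real t / (eps/4)) ^ t) + 4 * real t / eps + 8"] allI impI)
  fix t :: nat and eps :: real and V :: "nat set" and E X Y n
  assume t: "t > 0" and e: "0 < eps" "eps < 1" and G: "graph V E" and conn: "connected_graph V E"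
    and bp: "bipartite_with V E X Y" and cX: "card X = n" and cY: "card Y = n"
    and Cb: "real (min_degree V E) \<ge> 8 * ((real t - 1) * (real t / (eps/4)) ^ t) + 4 * real t / eps + 8"
    and nbc: "\<not> has_induced_biclaw V E t t"
  define K where "K = (real t - 1) * (real t / (eps/4)) ^ t"
  define C where "C = 8 * ((real t - 1) * (real t / (eps/4)) ^ t) + 4 * real t / eps + 8"
  have K0: "0 \<le> K" unfolding K_def using t e by simp
  have tp: "0 \<le> 4 * real t / eps" using e by simp
  have KC: "K \<le> C" unfolding C_def K_def[symmetric] using K0 tp by linarith
  have C0: "0 < C" unfolding C_def K_def[symmetric] using K0 tp by linarith
  have nb: "nobc V E t" by (rule nobc_from[OF G bp nbc])
  have bp': "bipartite_with V E Y X" using bp unfolding bipartite_with_def by blast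
  have s1: "real (card (low_set V E X eps)) * real (min_degree V E) \<le> K * real (card Y)"
    using main_side[OF G conn bp nb t e Cb] unfolding K_def .
  have s2: "real (card (low_set V E Y eps)) * real (min_degree V E) \<le> K * real (card X)"
    using main_side[OF G conn bp' nb t e Cb] unfolding K_def .
  show "real (card (low_set V E X eps)) \<le> (8 * ((real t - 1) * (real t / (eps/4)) ^ t) + 4 * real t / eps + 8) / real (min_degree V E) * real n \<and>
        real (card (low_set V E Y eps)) \<le> (8 * ((real t - 1) * (real t / (eps/4)) ^ t) + 4 * real t / eps + 8) / real (min_degree V E) * real n"
    unfolding C_def[symmetric]
    using final_bound[OF s1 KC _ C0] final_bound[OF s2 KC _ C0] Cb cX cY unfolding C_def by auto
qed


end
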